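(* Let $m,\Delta$ be positive integers, $X\subseteq\{-\Delta,\dots,\Delta\}^m$ and $x\in X$ such that $-x\in\mathrm{cone}(X\setminus\{x\})$. Then there is $\lambda\in\mathbb{Z}_{\ge0}^X$ with $\lambda_x>0$, at most $m+1$ non-zero components, $\|\lambda\|_\infty\le\Delta^m m^{m/2}$, and \[ -\lambda_x x=\sum_{y\in X\setminus\{x\}}\lambda_y y. \]
   Context: $\mathrm{cone}(Y)=\{\sum_{y\in Y}\lambda_y y:\lambda_y\ge0\}$. *)

theory Defs
  imports "HOL-Analysis.Analysis"
begin

definition pcone :: "('a::real_vector) set \<Rightarrow> 'a set" where
  "pcone Y = {(\<Sum>y\<in>Y. c y *\<^sub>R y) | c. \<forall>y\<in>Y. c y \<ge> 0}"

end

theory Submission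
  imports Defs
begin

lemma hadamard_orth:
  fixes A :: "real^'n^'n"
  assumes "finite S"
  shows "\<exists>B. det B = det A \<and> (\<forall>i. norm (B$i) \<le> norm (A$i)) \<and> (\<forall>i\<in>S. \<forall>j\<in>S. i \<noteq> j \<longrightarrow> B$i \<bullet> B$j = 0)"
  using assms
proof (induction S rule: finite_induct)
  case empty
  then show ?case by auto
next
  case (insert a S)
  then obtain B where B: "det B = det A" "\<forall>i. norm (B$i) \<le> norm (A$i)"
     "\<forall>i\<in>S. \<forall>j\<in>S. i \<noteq> j \<longrightarrow> B$i \<bullet> B$j = 0" by blast
  let ?W = "{B$j | j. j \<in> S}"
  obtain y z where yz: "y \<in> span ?W" "\<And>w. w \<in> span ?W \<Longrightarrow> orthogonal z w" "B$a = y + z"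
    using orthogonal_subspace_decomp_exists by blast
  define B' where "B' = (\<chi> k. if k = a then row a B + (-y) else row k B)"
  have rowB: "row k B = B$k" for k by (simp add: row_def vec_eq_iff)
  have B'a: "B'$a = z" using yz(3) by (simp add: B'_def rowB)
  have B'k: "k \<noteq> a \<Longrightarrow> B'$k = B$k" for k by (simp add: B'_def rowB)
  have "-y \<in> vec.span {row j B |j. j \<noteq> a}"
  proof -
    have "span ?W \<subseteq> span {row j B |j. j \<noteq> a}"
      using insert.hyps(2) by (intro span_mono) (auto simp: rowB)
    then show ?thesis using yz(1) by (simp add: span_vec_eq span_neg subset_iff)
  qed
  then have d: "det B' = det A" unfolding B'_def using det_row_span[of "-y" B a] B(1) by simp
  have zy: "z \<bullet> y = 0" using yz(2)[OF yz(1)] by (simp add: orthogonal_def)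
  have "norm z ^2 \<le> norm (B$a)^2"
    using zy yz(3) by (simp add: power2_norm_eq_inner inner_add_left inner_add_right inner_commute)
  then have "norm z \<le> norm (B$a)" by (simp add: power2_le_iff_abs_le)
  then have nz: "norm z \<le> norm (B$a)" .
  have n: "\<forall>i. norm (B'$i) \<le> norm (A$i)"
  proof
    fix i show "norm (B'$i) \<le> norm (A$i)"
      using B(2)[rule_format, of i] B'a B'k[of i] nz
      by (cases "i = a") auto
  qed
  have zW: "j \<in> S \<Longrightarrow> z \<bullet> B$j = 0" for j
    using yz(2)[of "B$j"] by (auto simp: orthogonal_def intro: span_base)
  have o: "\<forall>i\<in>insert a S. \<forall>j\<in>insert a S. i \<noteq> j \<longrightarrow> B'$i \<bullet> B'$j = 0"
  proof (intro ballI impI)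
    fix i j assume ij: "i \<in> insert a S" "j \<in> insert a S" "i \<noteq> j"
    show "B'$i \<bullet> B'$j = 0"
    proof (cases "i = a")
      case True
      then have "j \<in> S" "j \<noteq> a" using ij by auto
      then show ?thesis using True B'a B'k zW by simp
    next
      case False
      then have i: "i \<in> S" using ij by auto
      show ?thesis
      proof (cases "j = a")
        case True
        then show ?thesis using i False B'a B'k zW[OF i] by (simp add: inner_commute)
      next
        case F2: False
        then show ?thesis using i ij False B(3) B'k by auto
      qed
    qed
  qed
  show ?case using d n o by blast
qed

lemma hadamard:
  fixes A :: "real^'n^'n"
  shows "\<bar>det A\<bar> \<le> (\<Prod>i\<in>UNIV. norm (A$i))"
proof -
  obtain B where B: "det B = det A" "\<forall>i. norm (B$i) \<le> norm (A$i)"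
    "\<forall>i j. i \<noteq> j \<longrightarrow> B$i \<bullet> B$j = 0"
    using hadamard_orth[of "UNIV :: 'n set" A] by auto
  have e: "(B ** transpose B) $ i $ j = B$i \<bullet> B$j" for i j
    by (simp add: matrix_matrix_mult_def transpose_def inner_vec_def mult.commute)
  have "det B * det B = det (B ** transpose B)" by (simp add: det_mul)
  also have "\<dots> = (\<Prod>i\<in>UNIV. B$i \<bullet> B$i)"
    by (subst det_diagonal) (use B(3) e in auto)
  also have "\<dots> = (\<Prod>i\<in>UNIV. norm (B$i) ^ 2)"
    by (simp add: power2_norm_eq_inner)
  also have "\<dots> = (\<Prod>i\<in>UNIV. norm (B$i))^2"
    by (rule prod_power_distrib[symmetric])
  finally have "\<bar>det B\<bar> ^ 2 = (\<Prod>i\<in>UNIV. norm (B$i))^2"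
    by (simp add: power2_eq_square)
  then have "\<bar>det B\<bar> = (\<Prod>i\<in>UNIV. norm (B$i))"
    by (rule power2_eq_imp_eq) (auto intro: prod_nonneg)
  also have "\<dots> \<le> (\<Prod>i\<in>UNIV. norm (A$i))"
    by (intro prod_mono) (use B(2) in auto)
  finally show ?thesis using B(1) by simp
qed
lemma det_bound:
  fixes A :: "real^'n^'n"
  assumes "\<forall>i j. \<bar>A$i$j\<bar> \<le> D"
  shows "\<bar>det A\<bar> \<le> (sqrt (real CARD('n)) * D)^CARD('n)"
proof -
  have D0: "D \<ge> 0" using assms by (meson abs_ge_zero order_trans)
  have r: "norm (A$i) \<le> sqrt (real CARD('n)) * D" for i
  proof -
    have "norm (A$i) ^ 2 = (\<Sum>j\<in>UNIV. (A$i$j)^2)"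
      unfolding power2_norm_eq_inner by (simp add: inner_vec_def power2_eq_square)
    also have "\<dots> \<le> (\<Sum>j\<in>(UNIV::'n set). D^2)"
    proof (intro sum_mono)
      fix j
      have "\<bar>A$i$j\<bar> ^ 2 \<le> D ^ 2"
        using assms by (intro power_mono) auto
      then show "(A$i$j)^2 \<le> D^2" by simp
    qed
    also have "\<dots> = (sqrt (real CARD('n)) * D)^2"
      by (simp add: power_mult_distrib)
    finally show ?thesis by (rule power2_le_imp_le) (use D0 in auto)
  qed
  have "\<bar>det A\<bar> \<le> (\<Prod>i\<in>UNIV. norm (A$i))" by (rule hadamard)
  also have "\<dots> \<le> (\<Prod>i\<in>(UNIV::'n set). sqrt (real CARD('n)) * D)"
    using r by (intro prod_mono) auto
  also have "\<dots> = (sqrt (real CARD('n)) * D)^CARD('n)" by simp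
  finally show ?thesis .
qed


lemma conic_carath:
  fixes S :: "'a::euclidean_space set"
  assumes "finite S" "v = (\<Sum>y\<in>S. c y *\<^sub>R y)" "\<forall>y\<in>S. c y \<ge> 0"
  shows "\<exists>Y c'. Y \<subseteq> S \<and> independent Y \<and> (\<forall>y\<in>Y. c' y \<ge> 0) \<and> v = (\<Sum>y\<in>Y. c' y *\<^sub>R y)"
  using assms
proof (induction S arbitrary: c rule: finite_psubset_induct)
  case (psubset S)
  show ?case
  proof (cases "independent S")
    case True
    then show ?thesis using psubset.prems(1,2) by (intro exI[of _ S] exI[of _ c]) simp
  next
    case False
    then obtain u0 where u0: "\<exists>w\<in>S. u0 w \<noteq> 0" "(\<Sum>w\<in>S. u0 w *\<^sub>R w) = 0"
      using dependent_finite[OF psubset.hyps(1)] by auto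
    obtain u where u: "\<exists>w\<in>S. u w > 0" "(\<Sum>w\<in>S. u w *\<^sub>R w) = 0"
    proof (cases "\<exists>w\<in>S. u0 w > 0")
      case True
      then show ?thesis using that u0 by blast
    next
      case False
      from u0(1) obtain w where w: "w \<in> S" "u0 w \<noteq> 0" by blast
      with False have "- u0 w > 0" by (meson linorder_neqE_linordered_idom neg_0_less_iff_less)
      then have "\<exists>w\<in>S. - u0 w > 0" using w by blast
      moreover have "(\<Sum>w\<in>S. (- u0 w) *\<^sub>R w) = 0"
        using u0(2) by (simp add: sum_negf)
      ultimately show ?thesis by (rule that)
    qed
    define P where "P = {w\<in>S. u w > 0}"
    have fP: "finite P" "P \<noteq> {}" using psubset.hyps(1) u(1) by (auto simp: P_def)
    define t where "t = Min ((\<lambda>w. c w / u w) ` P)"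
    have "t \<in> (\<lambda>w. c w / u w) ` P"
      unfolding t_def using fP by (intro Min_in) auto
    then obtain y0 where y0: "y0 \<in> P" "t = c y0 / u y0" by blast
    have tle: "w \<in> P \<Longrightarrow> t \<le> c w / u w" for w
      unfolding t_def using fP by (intro Min_le) auto
    have t0: "t \<ge> 0" using y0 psubset.prems(2) by (auto simp: P_def)
    define c' where "c' = (\<lambda>w. c w - t * u w)"
    have c'0: "\<forall>w\<in>S - {y0}. c' w \<ge> 0"
    proof
      fix w assume w: "w \<in> S - {y0}"
      show "c' w \<ge> 0"
      proof (cases "u w > 0")
        case True
        then have "t \<le> c w / u w" using tle w by (auto simp: P_def)
        then show ?thesis using True by (simp add: c'_def field_simps)
      next
        case False
        then have "t * u w \<le> 0" using t0 by (simp add: mult_nonneg_nonpos)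
        moreover have "c w \<ge> 0" using psubset.prems(2) w by blast
        ultimately show ?thesis by (simp add: c'_def)
      qed
    qed
    have cy0: "c' y0 = 0" using y0 by (simp add: c'_def P_def)
    have "(\<Sum>w\<in>S. c' w *\<^sub>R w) = (\<Sum>w\<in>S. c w *\<^sub>R w) - t *\<^sub>R (\<Sum>w\<in>S. u w *\<^sub>R w)"
      by (simp add: c'_def scaleR_diff_left sum_subtractf scaleR_sum_right)
    then have "v = (\<Sum>w\<in>S. c' w *\<^sub>R w)" using u(2) psubset.prems(1) by simp
    also have "\<dots> = (\<Sum>w\<in>S - {y0}. c' w *\<^sub>R w)"
      using y0(1) cy0 psubset.hyps(1) by (intro sum.mono_neutral_right) (auto simp: P_def)
    finally have v: "v = (\<Sum>w\<in>S - {y0}. c' w *\<^sub>R w)" .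
    have "S - {y0} \<subset> S" using y0(1) by (auto simp: P_def)
    from psubset.IH[OF this v c'0] obtain Y c2 where "Y \<subseteq> S - {y0}" "independent Y"
      "\<forall>y\<in>Y. c2 y \<ge> 0" "v = (\<Sum>y\<in>Y. c2 y *\<^sub>R y)" by blast
    then show ?thesis by (intro exI[of _ Y] exI[of _ c2]) auto
  qed
qed


lemma det_Ints:
  fixes A :: "real^'n^'n"
  assumes "\<forall>i j. A$i$j \<in> \<int>"
  shows "det A \<in> \<int>"
  unfolding det_def using assms
  by (intro Ints_sum Ints_mult Ints_prod Ints_of_int) auto

lemma nat_floor_Ints: "r \<in> \<int> \<Longrightarrow> r \<ge> 0 \<Longrightarrow> real (nat \<lfloor>r\<rfloor>) = r"
  by (auto elim!: Ints_cases)

lemma finite_bounded_int_vecs: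
  assumes "\<forall>v\<in>X. \<forall>i. v $ i \<in> \<int> \<and> \<bar>v $ i\<bar> \<le> real D"
  shows "finite (X :: (real^'n) set)"
proof -
  define S where "S = {r::real. r \<in> \<int> \<and> \<bar>r\<bar> \<le> real D}"
  have "S \<subseteq> of_int ` {- int D..int D}"
  proof
    fix r assume "r \<in> S"
    then obtain z where z: "r = of_int z" "\<bar>real_of_int z\<bar> \<le> real D" by (auto simp: S_def elim!: Ints_cases)
    then have "\<bar>z\<bar> \<le> int D" by linarith
    then show "r \<in> of_int ` {- int D..int D}" using z(1) by (intro image_eqI[of _ _ z]) auto
  qed
  then have fS: "finite S" by (rule finite_subset) auto
  have "X \<subseteq> (\<lambda>g. vec_lambda g) ` (PiE UNIV (\<lambda>_. S))"
  proof
    fix v assume "v \<in> X"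
    then have "(\<lambda>i. v$i) \<in> PiE UNIV (\<lambda>_. S)" using assms by (auto simp: S_def)
    then show "v \<in> (\<lambda>g. vec_lambda g) ` (PiE UNIV (\<lambda>_. S))"
      by (intro image_eqI[of _ _ "\<lambda>i. v$i"]) (auto simp: vec_lambda_eta)
  qed
  moreover have "finite (PiE (UNIV::'n set) (\<lambda>_. S))" using fS by (intro finite_PiE) auto
  ultimately show ?thesis using finite_subset by blast
qed

theorem lemma11:
  fixes X :: "(real ^ 'n) set" and x :: "real ^ 'n" and \<Delta> :: nat
  assumes "\<Delta> > 0"
    and "\<forall>v\<in>X. \<forall>i. v $ i \<in> \<int> \<and> \<bar>v $ i\<bar> \<le> real \<Delta>"
    and "x \<in> X"
    and "- x \<in> pcone (X - {x})"
  shows "\<exists>(lam :: real ^ 'n \<Rightarrow> nat).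
           lam x > 0
         \<and> card {y\<in>X. lam y \<noteq> 0} \<le> CARD('n) + 1
         \<and> (\<forall>y\<in>X. real (lam y) \<le> real \<Delta> ^ CARD('n) * sqrt (real CARD('n)) ^ CARD('n))
         \<and> - (real (lam x) *\<^sub>R x) = (\<Sum>y\<in>X - {x}. real (lam y) *\<^sub>R y)"
proof -
  let ?n = "CARD('n)"
  have fX: "finite X" using finite_bounded_int_vecs[OF assms(2)] .
  obtain c where c: "\<forall>y\<in>X - {x}. c y \<ge> 0" "- x = (\<Sum>y\<in>X - {x}. c y *\<^sub>R y)"
    using assms(4) unfolding pcone_def by blast
  obtain Y c' where Y: "Y \<subseteq> X - {x}" "independent Y" "\<forall>y\<in>Y. c' y \<ge> 0"
      "- x = (\<Sum>y\<in>Y. c' y *\<^sub>R y)"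
    using conic_carath[OF _ c(2) c(1)] fX by blast
  have fY: "finite Y" and cY: "card Y \<le> ?n" using independent_bound[OF Y(2)] by auto
  define E where "E = range (\<lambda>i. axis i (1::real) :: real^'n)"
  have EB: "E = Basis" by (auto simp: E_def Basis_vec_def)
  obtain B where B: "Y \<subseteq> B" "B \<subseteq> Y \<union> E" "independent B" "Y \<union> E \<subseteq> span B"
    using maximal_independent_subset_extend[of Y "Y \<union> E"] Y(2) by blast
  have spanB: "span B = UNIV"
  proof -
    have "span E \<subseteq> span B" using B(4) by (meson le_sup_iff span_minimal subspace_span)
    then show ?thesis using EB by auto
  qed
  have fB: "finite B" using independent_bound[OF B(3)] by auto
  have cardB: "card B = ?n"
    using basis_card_eq_dim[of B UNIV] B(3) spanB by simp
  obtain f where f: "bij_betw f (UNIV::'n set) B"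
    using finite_same_card_bij[of "UNIV::'n set" B] fB cardB by auto
  define M :: "real^'n^'n" where "M = (\<chi> i j. f j $ i)"
  have Mv: "M *v d = (\<Sum>j\<in>UNIV. d$j *\<^sub>R f j)" for d
    by (simp add: matrix_mult_sum M_def column_def scalar_mult_eq_scaleR vec_lambda_eta)
  have sumB: "(\<Sum>j\<in>UNIV. u (f j) *\<^sub>R f j) = (\<Sum>b\<in>B. u b *\<^sub>R b)" for u
    using sum.reindex_bij_betw[OF f, of "\<lambda>b. u b *\<^sub>R b"] by simp
  have surj: "surj ((*v) M)"
  proof -
    { fix w :: "real^'n"
      have "w \<in> span B" using spanB by auto
      then obtain u where "w = (\<Sum>b\<in>B. u b *\<^sub>R b)" using span_finite[OF fB] by auto
      then have "w = M *v (\<chi> j. u (f j))" by (simp add: Mv sumB)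
      then have "w \<in> range ((*v) M)" by blast }
    then show ?thesis by auto
  qed
  have detM: "det M \<noteq> 0"
    using surj full_rank_surjective[of M] det_eq_0_rank[of M] by simp
  define d :: "real^'n" where "d = (\<chi> j. if f j \<in> Y then c' (f j) else 0)"
  have Md: "M *v d = - x"
  proof -
    have "M *v d = (\<Sum>b\<in>B. (if b \<in> Y then c' b else 0) *\<^sub>R b)"
      unfolding Mv d_def using sumB[of "\<lambda>b. if b \<in> Y then c' b else 0"] by simp
    also have "\<dots> = (\<Sum>b\<in>Y. c' b *\<^sub>R b)"
      using fB B(1) by (intro sum.mono_neutral_cong_right) auto
    finally show ?thesis using Y(4) by simp
  qed
  define Mk where "Mk = (\<lambda>k. (\<chi> i j. if j = k then (M *v d)$i else M$i$j) :: real^'n^'n)"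
  have cr: "det (Mk k) = d$k * det M" for k
    unfolding Mk_def by (rule cramer_lemma)
  have fj: "f j \<in> X \<or> f j \<in> E" for j using f B(2) Y(1) by (auto simp: bij_betw_def)
  have entM: "M$i$j \<in> \<int> \<and> \<bar>M$i$j\<bar> \<le> real \<Delta>" for i j
  proof (cases "f j \<in> X")
    case True then show ?thesis using assms(2) by (simp add: M_def)
  next
    case False
    then obtain l where "f j = axis l 1" using fj[of j] by (auto simp: E_def)
    then show ?thesis using assms(1) by (auto simp: M_def axis_def)
  qed
  have entMk: "(Mk k)$i$j \<in> \<int> \<and> \<bar>(Mk k)$i$j\<bar> \<le> real \<Delta>" for k i j
    using entM[of i j] assms(2) assms(3) by (auto simp: Mk_def Md)
  have bnd: "real \<Delta> ^ ?n * sqrt (real ?n) ^ ?n = (sqrt (real ?n) * real \<Delta>) ^ ?n"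
    by (simp add: power_mult_distrib)
  have bM: "\<bar>det M\<bar> \<le> real \<Delta> ^ ?n * sqrt (real ?n) ^ ?n"
    unfolding bnd by (rule det_bound) (use entM in blast)
  have bMk: "\<bar>det (Mk k)\<bar> \<le> real \<Delta> ^ ?n * sqrt (real ?n) ^ ?n" for k
    unfolding bnd by (rule det_bound) (use entMk in blast)
  have IM: "det M \<in> \<int>" by (rule det_Ints) (use entM in blast)
  have IMk: "det (Mk k) \<in> \<int>" for k by (rule det_Ints) (use entMk in blast)
  define g where "g = inv_into UNIV f"
  have fg: "y \<in> B \<Longrightarrow> f (g y) = y" for y
    using f unfolding g_def by (rule bij_betw_inv_into_right)
  define lam where "lam = (\<lambda>z. if z = x then nat \<lfloor>\<bar>det M\<bar>\<rfloor>
                       else if z \<in> Y then nat \<lfloor>\<bar>det (Mk (g z))\<bar>\<rfloor> else 0)"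
  have xY: "x \<notin> Y" using Y(1) by auto
  have lx: "real (lam x) = \<bar>det M\<bar>"
    unfolding lam_def using IM by (simp add: nat_floor_Ints)
  have ly: "real (lam y) = c' y * \<bar>det M\<bar>" if "y \<in> Y" for y
  proof -
    have yB: "y \<in> B" using that B(1) by auto
    have "d $ g y = c' y" using fg[OF yB] that by (simp add: d_def)
    then have "det (Mk (g y)) = c' y * det M" using cr by simp
    then have "\<bar>det (Mk (g y))\<bar> = c' y * \<bar>det M\<bar>" using Y(3) that by (simp add: abs_mult)
    moreover have "real (lam y) = \<bar>det (Mk (g y))\<bar>"
      unfolding lam_def using that xY IMk by (auto simp: nat_floor_Ints)
    ultimately show ?thesis by simp
  qed
  have l0: "lam y = 0" if "y \<noteq> x" "y \<notin> Y" for y using that by (simp add: lam_def)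
  have P1: "lam x > 0" using lx detM by (metis zero_less_abs_iff of_nat_0_less_iff)
  have "lam y \<noteq> 0 \<Longrightarrow> y \<in> insert x Y" for y using l0[of y] by auto
  then have "{y\<in>X. lam y \<noteq> 0} \<subseteq> insert x Y" by auto
  then have "card {y\<in>X. lam y \<noteq> 0} \<le> card (insert x Y)" using fY by (intro card_mono) auto
  also have "\<dots> \<le> ?n + 1" using fY cY by (simp add: card_insert_if)
  finally have P2: "card {y\<in>X. lam y \<noteq> 0} \<le> ?n + 1" .
  have P3: "\<forall>y\<in>X. real (lam y) \<le> real \<Delta> ^ ?n * sqrt (real ?n) ^ ?n"
  proof
    fix y assume "y \<in> X"
    show "real (lam y) \<le> real \<Delta> ^ ?n * sqrt (real ?n) ^ ?n"
    proof (cases "y = x")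
      case True then show ?thesis using lx bM by simp
    next
      case False
      show ?thesis
      proof (cases "y \<in> Y")
        case True
        then have "real (lam y) = \<bar>det (Mk (g y))\<bar>"
          unfolding lam_def using False IMk by (auto simp: nat_floor_Ints)
        then show ?thesis using bMk by simp
      next
        case F2: False
        then show ?thesis using False l0 by (simp add: zero_le_mult_iff)
      qed
    qed
  qed
  have "(\<Sum>y\<in>X - {x}. real (lam y) *\<^sub>R y) = (\<Sum>y\<in>Y. real (lam y) *\<^sub>R y)"
    using fX Y(1) l0 by (intro sum.mono_neutral_right) auto
  also have "\<dots> = (\<Sum>y\<in>Y. \<bar>det M\<bar> *\<^sub>R (c' y *\<^sub>R y))"
    using ly by (intro sum.cong) auto
  also have "\<dots> = \<bar>det M\<bar> *\<^sub>R (- x)" using Y(4) by (simp add: scaleR_sum_right)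
  finally have P4: "- (real (lam x) *\<^sub>R x) = (\<Sum>y\<in>X - {x}. real (lam y) *\<^sub>R y)"
    using lx by simp
  show ?thesis by (intro exI[of _ lam] conjI P1 P2 P3 P4)
qed

end
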